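(* Let $(X,Y)$ be a bivariate normal random vector in $\mathbb R^2$ with $\mathrm{Var}(X)=\mathrm{Var}(Y)>0$ and Pearson correlation $\varrho$. Using the metric $|x-y|$ on $\mathbb R$ and the Manhattan metric on pairs, \[ \big|1-\sqrt{1-\varrho}\,\big|\le\mathrm{eCor}(X,Y). \]
   Context: For probability measures $\mu,\nu$ on a metric space $(S,\rho)$ with finite first moments, $e(\mu,\nu)=\inf_\gamma\int\rho\,d\gamma$ over all couplings $\gamma$ of $\mu,\nu$. Pairs of reals carry the Manhattan metric $d[(x,y),(u,v)]=|x-u|+|y-v|$. $\mathrm{eCov}(X,Y)=e\big[(X,Y),(X',Y')\big]$ is the distance w.r.t. $d$ between the joint law of $(X,Y)$ and the product of its marginals (law of $(X',Y')$ with $X'\overset d=X$, $Y'\overset d=Y$ independent); $\mathrm{eVar}(X)=\mathrm{eCov}(X,X)$; $\mathrm{eCor}(X,Y)=\mathrm{eCov}(X,Y)/\min\{\mathrm{eVar}(X),\mathrm{eVar}(Y)\}$ when the denominator is positive. *)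

theory Defs
  imports "HOL-Probability.Probability"
begin

definition couplings :: "'a::second_countable_topology measure \<Rightarrow> 'a measure \<Rightarrow> ('a \<times> 'a) measure set" where
  "couplings \<mu> \<nu> = {\<gamma>. prob_space \<gamma> \<and> sets \<gamma> = sets (borel :: ('a \<times> 'a) measure) \<and>
      distr \<gamma> borel fst = \<mu> \<and> distr \<gamma> borel snd = \<nu>}"

definition edist :: "('a::second_countable_topology \<Rightarrow> 'a \<Rightarrow> real) \<Rightarrow> 'a measure \<Rightarrow> 'a measure \<Rightarrow> real" where
  "edist \<rho> \<mu> \<nu> = enn2real (INF \<gamma>\<in>couplings \<mu> \<nu>. \<integral>\<^sup>+ z. ennreal (\<rho> (fst z) (snd z)) \<partial>\<gamma>)"

definition manhattan :: "real \<times> real \<Rightarrow> real \<times> real \<Rightarrow> real" where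
  "manhattan p q = \<bar>fst p - fst q\<bar> + \<bar>snd p - snd q\<bar>"

definition eCov :: "'s measure \<Rightarrow> ('s \<Rightarrow> real) \<Rightarrow> ('s \<Rightarrow> real) \<Rightarrow> real" where
  "eCov M X Y = edist manhattan (distr M borel (\<lambda>\<omega>. (X \<omega>, Y \<omega>)))
      (distr M borel X \<Otimes>\<^sub>M distr M borel Y)"

definition eVar :: "'s measure \<Rightarrow> ('s \<Rightarrow> real) \<Rightarrow> real" where
  "eVar M X = eCov M X X"

definition eCor :: "'s measure \<Rightarrow> ('s \<Rightarrow> real) \<Rightarrow> ('s \<Rightarrow> real) \<Rightarrow> real" where
  "eCor M X Y = eCov M X Y / min (eVar M X) (eVar M Y)"

definition gaussian_rv :: "'s measure \<Rightarrow> ('s \<Rightarrow> real) \<Rightarrow> bool" where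
  "gaussian_rv M Z \<longleftrightarrow> (\<exists>c. AE \<omega> in M. Z \<omega> = c) \<or>
     (\<exists>m \<sigma>. \<sigma> > 0 \<and> distributed M lborel Z (normal_density m \<sigma>))"

definition bivariate_normal :: "'s measure \<Rightarrow> ('s \<Rightarrow> real) \<Rightarrow> ('s \<Rightarrow> real) \<Rightarrow> bool" where
  "bivariate_normal M X Y \<longleftrightarrow> X \<in> borel_measurable M \<and> Y \<in> borel_measurable M \<and>
     (\<forall>a b. gaussian_rv M (\<lambda>\<omega>. a * X \<omega> + b * Y \<omega>))"

definition covariance :: "'s measure \<Rightarrow> ('s \<Rightarrow> real) \<Rightarrow> ('s \<Rightarrow> real) \<Rightarrow> real" where
  "covariance M X Y = (\<integral>\<omega>. (X \<omega> - (\<integral>x. X x \<partial>M)) * (Y \<omega> - (\<integral>x. Y x \<partial>M)) \<partial>M)"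

definition pearson_cor :: "'s measure \<Rightarrow> ('s \<Rightarrow> real) \<Rightarrow> ('s \<Rightarrow> real) \<Rightarrow> real" where
  "pearson_cor M X Y = covariance M X Y / sqrt (covariance M X X * covariance M Y Y)"

end

theory Submission
  imports Defs
begin


lemma edist_le:
  assumes "\<gamma> \<in> couplings \<mu> \<nu>" "(\<integral>\<^sup>+ z. ennreal (\<rho> (fst z) (snd z)) \<partial>\<gamma>) \<le> ennreal c" "0 \<le> c"
  shows "edist \<rho> \<mu> \<nu> \<le> c"
proof -
  have "(INF \<gamma>\<in>couplings \<mu> \<nu>. \<integral>\<^sup>+ z. ennreal (\<rho> (fst z) (snd z)) \<partial>\<gamma>) \<le> ennreal c"
    using assms(1,2) by (meson INF_lower2)
  then have "enn2real (INF \<gamma>\<in>couplings \<mu> \<nu>. \<integral>\<^sup>+ z. ennreal (\<rho> (fst z) (snd z)) \<partial>\<gamma>) \<le> enn2real (ennreal c)"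
    by (intro enn2real_mono) auto
  then show ?thesis using assms(3) by (simp add: edist_def)
qed

lemma edist_ge:
  assumes "\<gamma>0 \<in> couplings \<mu> \<nu>" "(\<integral>\<^sup>+ z. ennreal (\<rho> (fst z) (snd z)) \<partial>\<gamma>0) < \<infinity>"
    "\<And>\<gamma>. \<gamma> \<in> couplings \<mu> \<nu> \<Longrightarrow> ennreal b \<le> (\<integral>\<^sup>+ z. ennreal (\<rho> (fst z) (snd z)) \<partial>\<gamma>)"
  shows "b \<le> edist \<rho> \<mu> \<nu>"
proof (cases "b \<le> 0")
  case True then show ?thesis by (simp add: edist_def order_trans[OF _ enn2real_nonneg])
next
  case False
  have "ennreal b \<le> (INF \<gamma>\<in>couplings \<mu> \<nu>. \<integral>\<^sup>+ z. ennreal (\<rho> (fst z) (snd z)) \<partial>\<gamma>)"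
    using assms(3) by (rule INF_greatest)
  moreover have "(INF \<gamma>\<in>couplings \<mu> \<nu>. \<integral>\<^sup>+ z. ennreal (\<rho> (fst z) (snd z)) \<partial>\<gamma>) < \<infinity>"
    using assms(1,2) by (meson INF_lower le_less_trans)
  ultimately have "enn2real (ennreal b) \<le> enn2real (INF \<gamma>\<in>couplings \<mu> \<nu>. \<integral>\<^sup>+ z. ennreal (\<rho> (fst z) (snd z)) \<partial>\<gamma>)"
    by (intro enn2real_mono) auto
  then show ?thesis using False by (simp add: edist_def)
qed

lemma meas_fst: "(fst :: (real\<times>real)\<times>(real\<times>real) \<Rightarrow> real\<times>real) \<in> borel_measurable borel"
  by (intro borel_measurable_continuous_onI continuous_intros)
lemma meas_snd: "(snd :: (real\<times>real)\<times>(real\<times>real) \<Rightarrow> real\<times>real) \<in> borel_measurable borel"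
  by (intro borel_measurable_continuous_onI continuous_intros)
lemma meas_manh: "(\<lambda>z::(real\<times>real)\<times>(real\<times>real). manhattan (fst z) (snd z)) \<in> borel_measurable borel"
  unfolding manhattan_def by (intro borel_measurable_continuous_onI continuous_intros)

lemma couplingsD:
  assumes "\<gamma> \<in> couplings \<mu> \<nu>"
  shows "prob_space \<gamma>" "sets \<gamma> = sets borel" "distr \<gamma> borel fst = \<mu>" "distr \<gamma> borel snd = \<nu>"
  using assms by (auto simp: couplings_def)

lemma coupling_lower:
  fixes \<mu> \<nu> :: "(real\<times>real) measure" and g :: "real\<times>real \<Rightarrow> real"
  assumes \<gamma>: "\<gamma> \<in> couplings \<mu> \<nu>" and g: "g \<in> borel_measurable borel"
    and lip: "\<And>p q. g q - g p \<le> manhattan p q"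
    and i\<mu>: "integrable \<mu> g" and i\<nu>: "integrable \<nu> g"
  shows "ennreal (integral\<^sup>L \<nu> g - integral\<^sup>L \<mu> g) \<le> (\<integral>\<^sup>+ z. ennreal (manhattan (fst z) (snd z)) \<partial>\<gamma>)"
proof -
  note C = couplingsD[OF \<gamma>]
  have mf: "fst \<in> borel_measurable \<gamma>" and ms: "snd \<in> borel_measurable \<gamma>"
    and mm: "(\<lambda>z. manhattan (fst z) (snd z)) \<in> borel_measurable \<gamma>"
    using meas_fst meas_snd meas_manh measurable_cong_sets[OF C(2) refl] by auto
  have i1: "integrable \<gamma> (\<lambda>z. g (fst z))"
    using i\<mu> integrable_distr_eq[OF mf g] C(3) by simp
  have i2: "integrable \<gamma> (\<lambda>z. g (snd z))"
    using i\<nu> integrable_distr_eq[OF ms g] C(4) by simp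
  have e1: "integral\<^sup>L \<mu> g = (\<integral>z. g (fst z) \<partial>\<gamma>)"
    using integral_distr[OF mf g] C(3) by simp
  have e2: "integral\<^sup>L \<nu> g = (\<integral>z. g (snd z) \<partial>\<gamma>)"
    using integral_distr[OF ms g] C(4) by simp
  show ?thesis
  proof (cases "(\<integral>\<^sup>+ z. ennreal (manhattan (fst z) (snd z)) \<partial>\<gamma>) = \<infinity>")
    case True then show ?thesis by simp
  next
    case False
    have nn: "\<And>z. 0 \<le> manhattan (fst z) (snd z)" by (simp add: manhattan_def)
    have im: "integrable \<gamma> (\<lambda>z. manhattan (fst z) (snd z))"
      using False nn by (intro integrableI_bounded mm) (simp add: top.not_eq_extremum)
    have "integral\<^sup>L \<nu> g - integral\<^sup>L \<mu> g = (\<integral>z. g (snd z) - g (fst z) \<partial>\<gamma>)"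
      using e1 e2 i1 i2 by simp
    also have "\<dots> \<le> (\<integral>z. manhattan (fst z) (snd z) \<partial>\<gamma>)"
      using i1 i2 im lip by (intro integral_mono) auto
    finally show ?thesis
      using nn_integral_eq_integral[OF im] nn by (simp add: ennreal_leI)
  qed
qed


lemma distr_pair_snd':
  assumes "prob_space M" "prob_space N"
  shows "distr (M \<Otimes>\<^sub>M N) N snd = N"
proof (intro measure_eqI)
  interpret N: prob_space N by fact
  interpret M: prob_space M by fact
  fix A assume A: "A \<in> sets (distr (M \<Otimes>\<^sub>M N) N snd)"
  from A have "emeasure (distr (M \<Otimes>\<^sub>M N) N snd) A = emeasure (M \<Otimes>\<^sub>M N) (space M \<times> A)"
    by (auto simp add: emeasure_distr space_pair_measure dest: sets.sets_into_space intro!: arg_cong2[where f=emeasure])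
  with A show "emeasure (distr (M \<Otimes>\<^sub>M N) N snd) A = emeasure N A"
    by (simp add: N.emeasure_pair_measure_Times M.emeasure_space_1)
qed simp

lemma sets_pair_borel_real:
  assumes "sets A = sets (borel::real measure)" "sets B = sets (borel::real measure)"
  shows "sets (A \<Otimes>\<^sub>M B) = sets (borel :: (real\<times>real) measure)"
  using sets_pair_measure_cong[OF assms] borel_prod by metis

lemma pair_facts:
  fixes A B :: "real measure"
  assumes "prob_space A" "prob_space B" "sets A = sets borel" "sets B = sets borel"
  shows "prob_space (A \<Otimes>\<^sub>M B)" "sets (A \<Otimes>\<^sub>M B) = sets borel"
    "distr (A \<Otimes>\<^sub>M B) borel fst = A" "distr (A \<Otimes>\<^sub>M B) borel snd = B"
proof -
  show "prob_space (A \<Otimes>\<^sub>M B)" using assms by (simp add: prob_space_pair)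
  show S: "sets (A \<Otimes>\<^sub>M B) = sets borel" using sets_pair_borel_real assms by blast
  have "distr (A \<Otimes>\<^sub>M B) borel fst = distr (A \<Otimes>\<^sub>M B) A fst"
    using assms by (intro distr_cong) auto
  then show "distr (A \<Otimes>\<^sub>M B) borel fst = A"
    using prob_space.distr_pair_fst[OF assms(2)] by simp
  have "distr (A \<Otimes>\<^sub>M B) borel snd = distr (A \<Otimes>\<^sub>M B) B snd"
    using assms by (intro distr_cong) auto
  then show "distr (A \<Otimes>\<^sub>M B) borel snd = B"
    using distr_pair_snd'[OF assms(1,2)] by simp
qed

lemma pair_facts2:
  fixes A B :: "(real\<times>real) measure"
  assumes "prob_space A" "prob_space B" "sets A = sets borel" "sets B = sets borel"
  shows "A \<Otimes>\<^sub>M B \<in> couplings A B"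
proof -
  have S: "sets (A \<Otimes>\<^sub>M B) = sets (borel :: ((real\<times>real)\<times>(real\<times>real)) measure)"
    using sets_pair_measure_cong[OF assms(3,4)] borel_prod by metis
  have "distr (A \<Otimes>\<^sub>M B) borel fst = distr (A \<Otimes>\<^sub>M B) A fst"
    using assms by (intro distr_cong) auto
  then have 1: "distr (A \<Otimes>\<^sub>M B) borel fst = A"
    using prob_space.distr_pair_fst[OF assms(2)] by simp
  have "distr (A \<Otimes>\<^sub>M B) borel snd = distr (A \<Otimes>\<^sub>M B) B snd"
    using assms by (intro distr_cong) auto
  then have 2: "distr (A \<Otimes>\<^sub>M B) borel snd = B"
    using distr_pair_snd'[OF assms(1,2)] by simp
  show ?thesis using 1 2 S assms by (simp add: couplings_def prob_space_pair)
qed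

lemma normal_prod_integral:
  fixes X Y :: "'s \<Rightarrow> real"
  assumes P: "prob_space M" and s: "0 < \<sigma>"
    and X: "distributed M lborel X (normal_density mx \<sigma>)"
    and Y: "distributed M lborel Y (normal_density my \<sigma>)"
  defines "\<nu> \<equiv> distr M borel X \<Otimes>\<^sub>M distr M borel Y"
  shows "integrable \<nu> (\<lambda>z. \<bar>fst z - snd z - (mx - my)\<bar>)"
    "(\<integral>z. \<bar>fst z - snd z - (mx - my)\<bar> \<partial>\<nu>) = sqrt 2 * \<sigma> * sqrt (2 / pi)"
proof -
  have mX: "X \<in> borel_measurable M" using distributed_measurable[OF X] by simp
  have mY: "Y \<in> borel_measurable M" using distributed_measurable[OF Y] by simp
  have pX: "prob_space (distr M borel X)" using P mX by (simp add: prob_space.prob_space_distr)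
  have pY: "prob_space (distr M borel Y)" using P mY by (simp add: prob_space.prob_space_distr)
  note F = pair_facts[OF pX pY, simplified, folded \<nu>_def]
  interpret prob_space \<nu> by (rule F(1))
  have dl: "\<And>Z. distr M lborel Z = distr M borel Z" by (intro distr_cong) auto
  have dl2: "\<And>Z. distr \<nu> lborel Z = distr \<nu> borel Z" by (intro distr_cong) auto
  have m1: "(fst :: real\<times>real \<Rightarrow> real) \<in> borel_measurable \<nu>"
    using measurable_fst[of "distr M borel X" "distr M borel Y"] unfolding \<nu>_def
    by (subst measurable_cong_sets[OF refl, of _ borel]) auto
  have m2: "(snd :: real\<times>real \<Rightarrow> real) \<in> borel_measurable \<nu>"
    using measurable_snd[of "distr M borel X" "distr M borel Y"] unfolding \<nu>_def
    by (subst measurable_cong_sets[OF refl, of _ borel]) auto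
  have "distr \<nu> lborel fst = density lborel (normal_density mx \<sigma>)"
    using trans[OF trans[OF dl2[of fst] F(3)] trans[OF dl[of X, symmetric] distributed_distr_eq_density[OF X]]] .
  then have DX: "distributed \<nu> lborel fst (normal_density mx \<sigma>)"
    unfolding distributed_def using m1 by simp
  have "distr \<nu> lborel snd = density lborel (normal_density my \<sigma>)"
    using trans[OF trans[OF dl2[of snd] F(4)] trans[OF dl[of Y, symmetric] distributed_distr_eq_density[OF Y]]] .
  then have DY: "distributed \<nu> lborel snd (normal_density my \<sigma>)"
    unfolding distributed_def using m2 by simp
  have mf: "fst \<in> borel_measurable \<nu>" "snd \<in> borel_measurable \<nu>"
    using distributed_measurable[OF DX] distributed_measurable[OF DY] by auto
  have "distr \<nu> (borel \<Otimes>\<^sub>M borel) (\<lambda>x. (fst x, snd x)) = distr \<nu> \<nu> (\<lambda>x. x)"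
  proof (rule distr_cong)
    show "sets (borel \<Otimes>\<^sub>M borel) = sets \<nu>" unfolding \<nu>_def by (simp add: borel_prod)
  qed auto
  then have "distr \<nu> (borel \<Otimes>\<^sub>M borel) (\<lambda>x. (fst x, snd x)) = \<nu>" by simp
  moreover have "distr \<nu> borel fst \<Otimes>\<^sub>M distr \<nu> borel snd = \<nu>"
    by (simp only: F(3,4)) (simp add: \<nu>_def)
  ultimately have ind: "indep_var borel fst borel snd"
    using mf by (simp only: indep_var_distribution_eq)
  have D: "distributed \<nu> lborel (\<lambda>x. fst x - snd x) (normal_density (mx - my) (sqrt (\<sigma>\<^sup>2 + \<sigma>\<^sup>2)))"
    by (rule diff_indep_normal[OF ind s s DX DY])
  have sq: "sqrt (\<sigma>\<^sup>2 + \<sigma>\<^sup>2) = sqrt 2 * \<sigma>"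
    using s by (simp add: real_sqrt_mult)
  have I1: "integrable lborel (\<lambda>x. normal_density (mx - my) (sqrt 2 * \<sigma>) x * \<bar>x - (mx - my)\<bar>)"
    using integrable_normal_moment_abs[of "sqrt 2 * \<sigma>" "mx - my" 1] s by simp
  show "integrable \<nu> (\<lambda>z. \<bar>fst z - snd z - (mx - my)\<bar>)"
    using distributed_integrable[OF D[unfolded sq], of "\<lambda>x. \<bar>x - (mx - my)\<bar>"] I1 by simp
  have "(\<integral>x. normal_density (mx - my) (sqrt 2 * \<sigma>) x * \<bar>x - (mx - my)\<bar> \<partial>lborel) = sqrt 2 * \<sigma> * sqrt (2 / pi)"
    using integral_normal_moment_abs_odd[of "sqrt 2 * \<sigma>" "mx - my" 0] s by simp
  then show "(\<integral>z. \<bar>fst z - snd z - (mx - my)\<bar> \<partial>\<nu>) = sqrt 2 * \<sigma> * sqrt (2 / pi)"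
    using distributed_integral[OF D[unfolded sq], of "\<lambda>x. \<bar>x - (mx - my)\<bar>"] by simp
qed


lemma cost_finite:
  fixes \<mu> \<nu> :: "(real\<times>real) measure"
  assumes \<gamma>: "\<gamma> \<in> couplings \<mu> \<nu>"
    and i\<mu>: "integrable \<mu> (\<lambda>p. \<bar>fst p\<bar> + \<bar>snd p\<bar>)" and i\<nu>: "integrable \<nu> (\<lambda>p. \<bar>fst p\<bar> + \<bar>snd p\<bar>)"
  shows "(\<integral>\<^sup>+ z. ennreal (manhattan (fst z) (snd z)) \<partial>\<gamma>) < \<infinity>"
proof -
  note C = couplingsD[OF \<gamma>]
  define a where "a = (\<lambda>p::real\<times>real. \<bar>fst p\<bar> + \<bar>snd p\<bar>)"
  have ma: "a \<in> borel_measurable borel" unfolding a_def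
    by (intro borel_measurable_continuous_onI continuous_intros)
  have mf: "fst \<in> borel_measurable \<gamma>" and ms: "snd \<in> borel_measurable \<gamma>"
    using meas_fst meas_snd measurable_cong_sets[OF C(2) refl] by auto
  have "(\<integral>\<^sup>+ z. ennreal (manhattan (fst z) (snd z)) \<partial>\<gamma>) \<le> (\<integral>\<^sup>+ z. ennreal (a (fst z)) + ennreal (a (snd z)) \<partial>\<gamma>)"
    by (intro nn_integral_mono) (auto simp: a_def manhattan_def ennreal_plus[symmetric] simp del: ennreal_plus intro!: ennreal_leI)
  also have "\<dots> = (\<integral>\<^sup>+ z. ennreal (a (fst z)) \<partial>\<gamma>) + (\<integral>\<^sup>+ z. ennreal (a (snd z)) \<partial>\<gamma>)"
    using ma mf ms by (intro nn_integral_add) auto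
  also have "(\<integral>\<^sup>+ z. ennreal (a (fst z)) \<partial>\<gamma>) = (\<integral>\<^sup>+ p. ennreal (a p) \<partial>\<mu>)"
  proof -
    have "(\<integral>\<^sup>+ p. ennreal (a p) \<partial>(distr \<gamma> borel fst)) = (\<integral>\<^sup>+ z. ennreal (a (fst z)) \<partial>\<gamma>)"
      using ma by (intro nn_integral_distr[OF mf]) auto
    then show ?thesis using C(3) by simp
  qed
  also have "(\<integral>\<^sup>+ z. ennreal (a (snd z)) \<partial>\<gamma>) = (\<integral>\<^sup>+ p. ennreal (a p) \<partial>\<nu>)"
  proof -
    have "(\<integral>\<^sup>+ p. ennreal (a p) \<partial>(distr \<gamma> borel snd)) = (\<integral>\<^sup>+ z. ennreal (a (snd z)) \<partial>\<gamma>)"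
      using ma by (intro nn_integral_distr[OF ms]) auto
    then show ?thesis using C(4) by simp
  qed
  also have "(\<integral>\<^sup>+ p. ennreal (a p) \<partial>\<mu>) = ennreal (\<integral>p. a p \<partial>\<mu>)"
    using i\<mu> by (intro nn_integral_eq_integral) (auto simp: a_def)
  also have "(\<integral>\<^sup>+ p. ennreal (a p) \<partial>\<nu>) = ennreal (\<integral>p. a p \<partial>\<nu>)"
    using i\<nu> by (intro nn_integral_eq_integral) (auto simp: a_def)
  finally show ?thesis by (simp add: le_less_trans ennreal_plus[symmetric] del: ennreal_plus)
qed

lemma eCov_lower:
  fixes X Y :: "'s \<Rightarrow> real"
  assumes P: "prob_space M" and s: "0 < \<sigma>"
    and X: "distributed M lborel X (normal_density mx \<sigma>)"
    and Y: "distributed M lborel Y (normal_density my \<sigma>)"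
    and hD: "(\<integral>\<omega>. \<bar>X \<omega> - Y \<omega> - (mx - my)\<bar> \<partial>M) = sqrt (2 / pi) * sD"
  shows "sqrt (2 / pi) * \<bar>sqrt 2 * \<sigma> - sD\<bar> \<le> eCov M X Y"
proof -
  define \<mu> where "\<mu> = distr M borel (\<lambda>\<omega>. (X \<omega>, Y \<omega>))"
  define \<nu> where "\<nu> = distr M borel X \<Otimes>\<^sub>M distr M borel Y"
  define g where "g = (\<lambda>p::real\<times>real. \<bar>fst p - snd p - (mx - my)\<bar>)"
  have mX: "X \<in> borel_measurable M" using distributed_measurable[OF X] by simp
  have mY: "Y \<in> borel_measurable M" using distributed_measurable[OF Y] by simp
  have mXY: "(\<lambda>\<omega>. (X \<omega>, Y \<omega>)) \<in> measurable M borel"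
    using measurable_Pair[OF mX mY] by (simp add: borel_prod)
  have pX: "prob_space (distr M borel X)" using P mX by (simp add: prob_space.prob_space_distr)
  have pY: "prob_space (distr M borel Y)" using P mY by (simp add: prob_space.prob_space_distr)
  note F = pair_facts[OF pX pY, simplified, folded \<nu>_def]
  have p\<mu>: "prob_space \<mu>" unfolding \<mu>_def using P mXY by (simp add: prob_space.prob_space_distr)
  have s\<mu>: "sets \<mu> = sets borel" unfolding \<mu>_def by simp
  have s\<nu>: "sets \<nu> = sets borel" unfolding \<nu>_def by (rule sets_pair_borel_real) auto
  have iX: "integrable M X"
    using distributed_integrable_var[OF X] integrable_normal_moment_nz_1[OF s] by simp
  have iY: "integrable M Y"
    using distributed_integrable_var[OF Y] integrable_normal_moment_nz_1[OF s] by simp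
  have mg: "g \<in> borel_measurable borel" unfolding g_def
    by (intro borel_measurable_continuous_onI continuous_intros)
  have i\<mu>: "integrable \<mu> g"
  proof -
    interpret prob_space M by (rule P)
    have "integrable M (\<lambda>x. \<bar>X x - Y x - (mx - my)\<bar>)"
      by (intro integrable_abs Bochner_Integration.integrable_diff iX iY integrable_const)
    then show ?thesis unfolding \<mu>_def using integrable_distr_eq[OF mXY mg] by (simp add: g_def)
  qed
  have e\<mu>: "integral\<^sup>L \<mu> g = sqrt (2 / pi) * sD"
    unfolding \<mu>_def using integral_distr[OF mXY mg] hD by (simp add: g_def)
  note NP = normal_prod_integral[OF P s X Y, folded \<nu>_def g_def]
  have ia\<mu>: "integrable \<mu> (\<lambda>p. \<bar>fst p\<bar> + \<bar>snd p\<bar>)"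
    unfolding \<mu>_def
    by (subst integrable_distr_eq[OF mXY]) (auto intro!: borel_measurable_continuous_onI continuous_intros iX iY)
  have m1: "(fst :: real\<times>real \<Rightarrow> real) \<in> borel_measurable \<nu>"
    using measurable_fst[of "distr M borel X" "distr M borel Y"] unfolding \<nu>_def
    by (subst measurable_cong_sets[OF refl, of _ borel]) auto
  have m2: "(snd :: real\<times>real \<Rightarrow> real) \<in> borel_measurable \<nu>"
    using measurable_snd[of "distr M borel X" "distr M borel Y"] unfolding \<nu>_def
    by (subst measurable_cong_sets[OF refl, of _ borel]) auto
  have "integrable \<nu> (\<lambda>p. \<bar>fst p\<bar>)"
    using integrable_distr_eq[OF m1, of abs] F(3) integrable_distr_eq[OF mX, of abs] iX
    by (simp add: borel_measurable_continuous_onI continuous_intros)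
  moreover have "integrable \<nu> (\<lambda>p. \<bar>snd p\<bar>)"
    using integrable_distr_eq[OF m2, of abs] F(4) integrable_distr_eq[OF mY, of abs] iY
    by (simp add: borel_measurable_continuous_onI continuous_intros)
  ultimately have ia\<nu>: "integrable \<nu> (\<lambda>p. \<bar>fst p\<bar> + \<bar>snd p\<bar>)" by simp
  have c0: "\<mu> \<Otimes>\<^sub>M \<nu> \<in> couplings \<mu> \<nu>"
    by (rule pair_facts2[OF p\<mu> F(1) s\<mu> s\<nu>])
  have lipg: "\<And>p q. g q - g p \<le> manhattan p q" and lipg': "\<And>p q. (- g q) - (- g p) \<le> manhattan p q"
    by (auto simp: g_def manhattan_def)
  have "sqrt (2 / pi) * \<bar>sqrt 2 * \<sigma> - sD\<bar> \<le> edist manhattan \<mu> \<nu>"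
  proof (rule edist_ge[OF c0 cost_finite[OF c0 ia\<mu> ia\<nu>]])
    fix \<gamma> assume \<gamma>: "\<gamma> \<in> couplings \<mu> \<nu>"
    have 1: "ennreal (integral\<^sup>L \<nu> g - integral\<^sup>L \<mu> g) \<le> (\<integral>\<^sup>+ z. ennreal (manhattan (fst z) (snd z)) \<partial>\<gamma>)"
      by (rule coupling_lower[OF \<gamma> mg lipg i\<mu> NP(1)])
    have 2: "ennreal (integral\<^sup>L \<nu> (\<lambda>p. - g p) - integral\<^sup>L \<mu> (\<lambda>p. - g p)) \<le> (\<integral>\<^sup>+ z. ennreal (manhattan (fst z) (snd z)) \<partial>\<gamma>)"
      by (rule coupling_lower[OF \<gamma> _ lipg']) (use mg i\<mu> NP(1) in auto)
    have eq: "sqrt (2 / pi) * \<bar>sqrt 2 * \<sigma> - sD\<bar> = \<bar>integral\<^sup>L \<nu> g - integral\<^sup>L \<mu> g\<bar>"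
    proof -
      have "\<bar>integral\<^sup>L \<nu> g - integral\<^sup>L \<mu> g\<bar> = \<bar>sqrt (2 / pi) * (sqrt 2 * \<sigma> - sD)\<bar>"
        using NP(2) e\<mu> by (simp add: algebra_simps)
      also have "\<dots> = sqrt (2 / pi) * \<bar>sqrt 2 * \<sigma> - sD\<bar>" by (simp add: abs_mult)
      finally show ?thesis ..
    qed
    show "ennreal (sqrt (2 / pi) * \<bar>sqrt 2 * \<sigma> - sD\<bar>) \<le> (\<integral>\<^sup>+ z. ennreal (manhattan (fst z) (snd z)) \<partial>\<gamma>)"
      unfolding eq using 1 2 by (cases "0 \<le> integral\<^sup>L \<nu> g - integral\<^sup>L \<mu> g") auto
  qed
  then show ?thesis by (simp add: eCov_def \<mu>_def \<nu>_def)
qed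




lemma eVar_upper:
  fixes X :: "'s \<Rightarrow> real"
  assumes P: "prob_space M" and s: "0 < \<sigma>"
    and X: "distributed M lborel X (normal_density mx \<sigma>)"
  shows "eVar M X \<le> sqrt 2 * \<sigma> * sqrt (2 / pi)"
proof -
  define NX where "NX = distr M borel X"
  define \<mu> where "\<mu> = distr M borel (\<lambda>\<omega>. (X \<omega>, X \<omega>))"
  define \<nu> where "\<nu> = NX \<Otimes>\<^sub>M NX"
  define B where "B = measure_pmf (bernoulli_pmf (1/2))"
  define Pm where "Pm = B \<Otimes>\<^sub>M \<nu>"
  define w where "w = (\<lambda>z::bool\<times>(real\<times>real). if fst z then fst (snd z) else snd (snd z))"
  define \<phi> where "\<phi> = (\<lambda>z::bool\<times>(real\<times>real). ((w z, w z), snd z))"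
  define \<gamma> where "\<gamma> = distr Pm borel \<phi>"
  have mX: "X \<in> borel_measurable M" using distributed_measurable[OF X] by simp
  have pX: "prob_space NX" unfolding NX_def using P mX by (simp add: prob_space.prob_space_distr)
  have sX: "sets NX = sets borel" unfolding NX_def by simp
  note F = pair_facts[OF pX pX sX sX, folded \<nu>_def]
  have pB: "prob_space B" unfolding B_def by (rule prob_space_measure_pmf)
  have pP: "prob_space Pm" unfolding Pm_def using pB F(1) by (rule prob_space_pair)
  have msnd: "snd \<in> measurable Pm borel"
    using measurable_snd[of B \<nu>] measurable_cong_sets[OF refl F(2), of "B \<Otimes>\<^sub>M \<nu>"] unfolding Pm_def by simp
  have mfst: "fst \<in> measurable Pm (count_space UNIV)"
    using measurable_fst[of B \<nu>] unfolding Pm_def B_def by (simp add: measurable_cong_sets)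
  have setT: "{x \<in> space Pm. fst x} \<in> sets Pm"
  proof -
    have "fst -` {True} \<inter> space Pm \<in> sets Pm" using measurable_sets[OF mfst] by simp
    moreover have "fst -` {True} \<inter> space Pm = {x \<in> space Pm. fst x}" by auto
    ultimately show ?thesis by simp
  qed
  have mr1: "(fst :: real\<times>real \<Rightarrow> real) \<in> borel_measurable borel"
    by (intro borel_measurable_continuous_onI continuous_intros)
  have mr2: "(snd :: real\<times>real \<Rightarrow> real) \<in> borel_measurable borel"
    by (intro borel_measurable_continuous_onI continuous_intros)
  have mw: "w \<in> borel_measurable Pm"
    unfolding w_def
    by (rule measurable_If[OF measurable_comp[OF msnd mr1] measurable_comp[OF msnd mr2] setT, unfolded o_def])
  have mww: "(\<lambda>z. (w z, w z)) \<in> measurable Pm borel"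
    using measurable_Pair[OF mw mw] by (simp add: borel_prod)
  have m\<phi>: "\<phi> \<in> measurable Pm borel"
    using measurable_Pair[OF mww msnd] unfolding \<phi>_def by (simp add: borel_prod)
  interpret \<nu>: prob_space \<nu> by (rule F(1))
  interpret NX: prob_space NX by (rule pX)
  interpret B: prob_space B by (rule pB)
  have spP: "space Pm = UNIV" unfolding Pm_def \<nu>_def NX_def B_def by (simp add: space_pair_measure)
  have wN: "distr Pm borel w = NX"
  proof (rule measure_eqI)
    show "sets (distr Pm borel w) = sets NX" using sX by simp
  next
    fix A assume "A \<in> sets (distr Pm borel w)"
    then have A: "A \<in> sets borel" by simp
    have S: "w -` A \<inter> space Pm \<in> sets Pm" using measurable_sets[OF mw A] .
    have "emeasure (distr Pm borel w) A = emeasure Pm (w -` A \<inter> space Pm)"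
      by (rule emeasure_distr[OF mw A])
    also have "\<dots> = (\<integral>\<^sup>+ c. emeasure \<nu> (Pair c -` (w -` A \<inter> space Pm)) \<partial>B)"
      using S unfolding Pm_def by (rule \<nu>.emeasure_pair_measure_alt)
    also have "\<dots> = (\<integral>\<^sup>+ c. emeasure NX A \<partial>B)"
    proof (rule nn_integral_cong)
      fix c :: bool
      have AN: "A \<in> sets NX" using A sX by simp
      have UN: "UNIV \<in> sets NX" using sX by simp
      have sN: "space NX = UNIV" unfolding NX_def by simp
      show "emeasure \<nu> (Pair c -` (w -` A \<inter> space Pm)) = emeasure NX A"
      proof (cases c)
        case True
        then have "Pair c -` (w -` A \<inter> space Pm) = A \<times> UNIV" by (auto simp: w_def spP)
        then show ?thesis using NX.emeasure_pair_measure_Times[OF AN UN] NX.emeasure_space_1 sN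
          by (simp add: \<nu>_def)
      next
        case False
        then have "Pair c -` (w -` A \<inter> space Pm) = UNIV \<times> A" by (auto simp: w_def spP)
        then show ?thesis using NX.emeasure_pair_measure_Times[OF UN AN] NX.emeasure_space_1 sN
          by (simp add: \<nu>_def)
      qed
    qed
    also have "\<dots> = emeasure NX A" using B.emeasure_space_1 by simp
    finally show "emeasure (distr Pm borel w) A = emeasure NX A" .
  qed
  have mdiag: "(\<lambda>x::real. (x, x)) \<in> measurable borel borel"
    by (intro borel_measurable_continuous_onI continuous_intros)
  have c1: "distr \<gamma> borel fst = \<mu>"
  proof -
    have "distr \<gamma> borel fst = distr Pm borel (fst \<circ> \<phi>)"
      unfolding \<gamma>_def by (rule distr_distr[OF meas_fst m\<phi>])
    also have "fst \<circ> \<phi> = (\<lambda>x. (x, x)) \<circ> w" by (auto simp: \<phi>_def)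
    also have "distr Pm borel ((\<lambda>x::real. (x, x)) \<circ> w) = distr (distr Pm borel w) borel (\<lambda>x. (x, x))"
      by (rule distr_distr[OF mdiag mw, symmetric])
    also have "\<dots> = distr (distr M borel X) borel (\<lambda>x. (x, x))" using wN NX_def by simp
    also have "\<dots> = \<mu>" unfolding \<mu>_def using distr_distr[OF mdiag mX] by (simp add: o_def)
    finally show ?thesis .
  qed
  have c2: "distr \<gamma> borel snd = \<nu>"
  proof -
    have "distr \<gamma> borel snd = distr Pm borel (snd \<circ> \<phi>)"
      unfolding \<gamma>_def by (rule distr_distr[OF meas_snd m\<phi>])
    also have "snd \<circ> \<phi> = snd" by (auto simp: \<phi>_def)
    also have "distr Pm borel snd = distr Pm \<nu> snd" using F(2) by (intro distr_cong) auto
    also have "\<dots> = \<nu>" unfolding Pm_def by (rule distr_pair_snd'[OF pB F(1)])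
    finally show ?thesis .
  qed
  have s\<gamma>: "sets \<gamma> = sets borel" unfolding \<gamma>_def by simp
  have p\<gamma>: "prob_space \<gamma>" unfolding \<gamma>_def using pP m\<phi> by (simp add: prob_space.prob_space_distr)
  have cp: "\<gamma> \<in> couplings \<mu> \<nu>" using c1 c2 s\<gamma> p\<gamma> by (simp add: couplings_def)
  note NP = normal_prod_integral[OF P s X X, folded NX_def, folded \<nu>_def, simplified]
  have mh: "(\<lambda>p::real\<times>real. \<bar>fst p - snd p\<bar>) \<in> borel_measurable borel"
    by (intro borel_measurable_continuous_onI continuous_intros)
  have "(\<integral>\<^sup>+ z. ennreal (manhattan (fst z) (snd z)) \<partial>\<gamma>) = (\<integral>\<^sup>+ z. ennreal (manhattan (fst (\<phi> z)) (snd (\<phi> z))) \<partial>Pm)"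
    unfolding \<gamma>_def using meas_manh by (intro nn_integral_distr[OF m\<phi>]) auto
  also have "\<dots> = (\<integral>\<^sup>+ z. ennreal (\<bar>fst (snd z) - snd (snd z)\<bar>) \<partial>Pm)"
    by (intro nn_integral_cong) (auto simp: manhattan_def \<phi>_def w_def abs_minus_commute)
  also have "\<dots> = (\<integral>\<^sup>+ p. ennreal (\<bar>fst p - snd p\<bar>) \<partial>(distr Pm borel snd))"
    using mh by (intro nn_integral_distr[OF msnd, symmetric]) auto
  also have "distr Pm borel snd = \<nu>" using c2 unfolding \<gamma>_def
    using distr_distr[OF meas_snd m\<phi>] by (simp add: \<phi>_def o_def)
  also have "(\<integral>\<^sup>+ p. ennreal (\<bar>fst p - snd p\<bar>) \<partial>\<nu>) = ennreal (\<integral>p. \<bar>fst p - snd p\<bar> \<partial>\<nu>)"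
    using NP(1) by (intro nn_integral_eq_integral) auto
  also have "\<dots> = ennreal (sqrt 2 * \<sigma> * sqrt (2 / pi))" using NP(2) by simp
  finally have cost: "(\<integral>\<^sup>+ z. ennreal (manhattan (fst z) (snd z)) \<partial>\<gamma>) \<le> ennreal (sqrt 2 * \<sigma> * sqrt (2 / pi))"
    by simp
  have "edist manhattan \<mu> \<nu> \<le> sqrt 2 * \<sigma> * sqrt (2 / pi)"
    by (rule edist_le[OF cp cost]) (use s in simp)
  then show ?thesis by (simp add: eVar_def eCov_def \<mu>_def \<nu>_def NX_def)
qed



lemma gauss_const_var:
  fixes Z :: "'s \<Rightarrow> real"
  assumes P: "prob_space M" and Z: "Z \<in> borel_measurable M" and c: "AE \<omega> in M. Z \<omega> = c"
  shows "prob_space.expectation M Z = c" "prob_space.variance M Z = 0"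
    "(\<integral>\<omega>. \<bar>Z \<omega> - c\<bar> \<partial>M) = 0"
proof -
  interpret prob_space M by (rule P)
  have "expectation Z = expectation (\<lambda>_. c)" using Z c by (intro integral_cong_AE) auto
  then show E: "expectation Z = c" by (simp add: prob_space)
  have "variance Z = expectation (\<lambda>_. 0::real)" unfolding E using Z c by (intro integral_cong_AE) auto
  then show "variance Z = 0" by simp
  have "(\<integral>\<omega>. \<bar>Z \<omega> - c\<bar> \<partial>M) = expectation (\<lambda>_. 0::real)" using Z c by (intro integral_cong_AE) auto
  then show "(\<integral>\<omega>. \<bar>Z \<omega> - c\<bar> \<partial>M) = 0" by simp
qed

lemma gauss_normal:
  assumes P: "prob_space M" and Z: "Z \<in> borel_measurable M" and G: "gaussian_rv M Z"
    and v: "prob_space.variance M Z > 0"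
  shows "\<exists>m. distributed M lborel Z (normal_density m (sqrt (prob_space.variance M Z)))"
proof -
  interpret prob_space M by (rule P)
  from G consider (c) c where "AE \<omega> in M. Z \<omega> = c" | (n) m s where "s > 0" "distributed M lborel Z (normal_density m s)"
    unfolding gaussian_rv_def by blast
  then show ?thesis
  proof cases
    case c then show ?thesis using gauss_const_var[OF P Z] v by simp
  next
    case n
    have "variance Z = s\<^sup>2" using normal_distributed_variance[OF n] .
    then have "sqrt (variance Z) = s" using n(1) by simp
    then show ?thesis using n by metis
  qed
qed

lemma gauss_abs_dev:
  assumes P: "prob_space M" and Z: "Z \<in> borel_measurable M" and G: "gaussian_rv M Z"
  shows "(\<integral>\<omega>. \<bar>Z \<omega> - prob_space.expectation M Z\<bar> \<partial>M) = sqrt (2 / pi) * sqrt (prob_space.variance M Z)"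
proof -
  interpret prob_space M by (rule P)
  from G consider (c) c where "AE \<omega> in M. Z \<omega> = c" | (n) m s where "s > 0" "distributed M lborel Z (normal_density m s)"
    unfolding gaussian_rv_def by blast
  then show ?thesis
  proof cases
    case c then show ?thesis using gauss_const_var[OF P Z c] by simp
  next
    case n
    have V: "variance Z = s\<^sup>2" using normal_distributed_variance[OF n] .
    have E: "expectation Z = m" using normal_distributed_expectation[OF n] .
    have "(\<integral>x. normal_density m s x * \<bar>x - m\<bar> \<partial>lborel) = s * sqrt (2 / pi)"
      using integral_normal_moment_abs_odd[of s m 0] n(1) by simp
    then have "(\<integral>\<omega>. \<bar>Z \<omega> - m\<bar> \<partial>M) = s * sqrt (2 / pi)"
      using distributed_integral[OF n(2), of "\<lambda>x. \<bar>x - m\<bar>"] by simp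
    then show ?thesis using V E n(1) by simp
  qed
qed


lemma abs_mult_le_sq: "\<bar>(a::real) * b\<bar> \<le> a\<^sup>2 + b\<^sup>2"
proof (cases "\<bar>a\<bar> \<le> \<bar>b\<bar>")
  case True
  then have "\<bar>a\<bar> * \<bar>b\<bar> \<le> \<bar>b\<bar> * \<bar>b\<bar>" by (intro mult_right_mono) auto
  then show ?thesis by (simp add: abs_mult power2_eq_square abs_mult_self_eq) (smt (verit) zero_le_square)
next
  case False
  then have "\<bar>a\<bar> * \<bar>b\<bar> \<le> \<bar>a\<bar> * \<bar>a\<bar>" by (intro mult_left_mono) auto
  then show ?thesis by (simp add: abs_mult power2_eq_square abs_mult_self_eq) (smt (verit) zero_le_square)
qed

theorem mainTheorem3:
  fixes M :: "'s measure" and X Y :: "'s \<Rightarrow> real"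
  assumes "prob_space M"
    and "bivariate_normal M X Y"
    and "prob_space.variance M X = prob_space.variance M Y"
    and "prob_space.variance M X > 0"
  shows "\<bar>1 - sqrt (1 - pearson_cor M X Y)\<bar> \<le> eCor M X Y"
proof -
  interpret prob_space M by (rule assms(1))
  have mX: "X \<in> borel_measurable M" and mY: "Y \<in> borel_measurable M"
    and G: "\<And>a b. gaussian_rv M (\<lambda>\<omega>. a * X \<omega> + b * Y \<omega>)"
    using assms(2) by (auto simp: bivariate_normal_def)
  define V where "V = variance X"
  define \<sigma> where "\<sigma> = sqrt V"
  have Vpos: "V > 0" using assms(4) by (simp add: V_def)
  have spos: "\<sigma> > 0" using Vpos by (simp add: \<sigma>_def)
  have sV: "\<sigma>\<^sup>2 = V" using Vpos by (simp add: \<sigma>_def)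
  have GX: "gaussian_rv M X" using G[of 1 0] by simp
  have GY: "gaussian_rv M Y" using G[of 0 1] by simp
  have GD: "gaussian_rv M (\<lambda>\<omega>. X \<omega> - Y \<omega>)" using G[of 1 "-1"] by simp
  obtain mx where X: "distributed M lborel X (normal_density mx \<sigma>)"
    using gauss_normal[OF assms(1) mX GX assms(4)] by (auto simp: \<sigma>_def V_def)
  obtain my where Y: "distributed M lborel Y (normal_density my \<sigma>)"
    using gauss_normal[OF assms(1) mY GY] assms(3,4) by (auto simp: \<sigma>_def V_def)
  have EX: "expectation X = mx" using normal_distributed_expectation[OF spos X] .
  have EY: "expectation Y = my" using normal_distributed_expectation[OF spos Y] .
  have iX: "integrable M X"
    using distributed_integrable_var[OF X] integrable_normal_moment_nz_1[OF spos] by simp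
  have iY: "integrable M Y"
    using distributed_integrable_var[OF Y] integrable_normal_moment_nz_1[OF spos] by simp
  have ED: "expectation (\<lambda>\<omega>. X \<omega> - Y \<omega>) = mx - my" using iX iY EX EY by simp
  define sD where "sD = sqrt (variance (\<lambda>\<omega>. X \<omega> - Y \<omega>))"
  have hD: "(\<integral>\<omega>. \<bar>X \<omega> - Y \<omega> - (mx - my)\<bar> \<partial>M) = sqrt (2 / pi) * sD"
    using gauss_abs_dev[OF assms(1) _ GD] ED mX mY by (simp add: sD_def)
  have L: "sqrt (2 / pi) * \<bar>sqrt 2 * \<sigma> - sD\<bar> \<le> eCov M X Y"
    by (rule eCov_lower[OF assms(1) spos X Y hD])
  define c where "c = sqrt 2 * \<sigma> * sqrt (2 / pi)"
  have cpos: "c > 0" using spos by (simp add: c_def)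
  have VX: "eVar M X = c"
  proof (rule antisym)
    show "eVar M X \<le> c" unfolding c_def by (rule eVar_upper[OF assms(1) spos X])
    have "sqrt (2 / pi) * \<bar>sqrt 2 * \<sigma> - 0\<bar> \<le> eCov M X X"
      by (rule eCov_lower[OF assms(1) spos X X]) simp
    then show "c \<le> eVar M X" using spos by (simp add: c_def eVar_def mult_ac)
  qed
  have VY: "eVar M Y = c"
  proof (rule antisym)
    show "eVar M Y \<le> c" unfolding c_def by (rule eVar_upper[OF assms(1) spos Y])
    have "sqrt (2 / pi) * \<bar>sqrt 2 * \<sigma> - 0\<bar> \<le> eCov M Y Y"
      by (rule eCov_lower[OF assms(1) spos Y Y]) simp
    then show "c \<le> eVar M Y" using spos by (simp add: c_def eVar_def mult_ac)
  qed
  have cor: "eCor M X Y = eCov M X Y / c" using VX VY by (simp add: eCor_def)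
  have A: "sqrt (2 / pi) * \<bar>sqrt 2 * \<sigma> - sD\<bar> / c \<le> eCor M X Y"
    unfolding cor using divide_right_mono[OF L, of c] cpos by simp
  have A2: "sqrt (2 / pi) * \<bar>sqrt 2 * \<sigma> - sD\<bar> / c = \<bar>1 - sD / (sqrt 2 * \<sigma>)\<bar>"
  proof -
    have "sqrt (2 / pi) * \<bar>sqrt 2 * \<sigma> - sD\<bar> / c = \<bar>sqrt 2 * \<sigma> - sD\<bar> / (sqrt 2 * \<sigma>)"
      unfolding c_def using spos by (simp add: field_simps)
    also have "\<dots> = \<bar>(sqrt 2 * \<sigma> - sD) / (sqrt 2 * \<sigma>)\<bar>" using spos by simp
    also have "(sqrt 2 * \<sigma> - sD) / (sqrt 2 * \<sigma>) = 1 - sD / (sqrt 2 * \<sigma>)"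
      using spos by (simp add: field_simps)
    finally show ?thesis .
  qed
  define K where "K = covariance M X Y"
  have ia2: "integrable M (\<lambda>\<omega>. (X \<omega> - mx)\<^sup>2)"
    using distributed_integrable[OF X, of "\<lambda>x. (x - mx)^2"] integrable_normal_moment[OF spos, of mx 2] by simp
  have ib2: "integrable M (\<lambda>\<omega>. (Y \<omega> - my)\<^sup>2)"
    using distributed_integrable[OF Y, of "\<lambda>x. (x - my)^2"] integrable_normal_moment[OF spos, of my 2] by simp
  have iab: "integrable M (\<lambda>\<omega>. (X \<omega> - mx) * (Y \<omega> - my))"
    by (rule Bochner_Integration.integrable_bound[OF Bochner_Integration.integrable_add[OF ia2 ib2]])
       (use mX mY abs_mult_le_sq in auto)
  have cXX: "covariance M X X = V" unfolding covariance_def V_def by (simp add: power2_eq_square)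
  have cYY: "covariance M Y Y = V" unfolding covariance_def V_def using assms(3) by (simp add: power2_eq_square)
  have VXi: "(\<integral>\<omega>. (X \<omega> - mx)\<^sup>2 \<partial>M) = V" using EX by (simp add: V_def)
  have VYi: "(\<integral>\<omega>. (Y \<omega> - my)\<^sup>2 \<partial>M) = V" using EY assms(3) by (simp add: V_def)
  have Ki: "(\<integral>\<omega>. (X \<omega> - mx) * (Y \<omega> - my) \<partial>M) = K" using EX EY by (simp add: K_def covariance_def)
  have VD: "variance (\<lambda>\<omega>. X \<omega> - Y \<omega>) = 2 * V - 2 * K"
  proof -
    have "variance (\<lambda>\<omega>. X \<omega> - Y \<omega>) = (\<integral>\<omega>. ((X \<omega> - mx)\<^sup>2 + (Y \<omega> - my)\<^sup>2) - 2 * ((X \<omega> - mx) * (Y \<omega> - my)) \<partial>M)"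
      unfolding ED by (intro Bochner_Integration.integral_cong) (auto simp: power2_eq_square algebra_simps)
    also have "\<dots> = V + V - 2 * K"
      using ia2 ib2 iab VXi VYi Ki by simp
    finally show ?thesis by simp
  qed
  have pc: "pearson_cor M X Y = K / V"
    unfolding pearson_cor_def K_def[symmetric] cXX cYY using Vpos by simp
  have "1 - pearson_cor M X Y = (2 * V - 2 * K) / (2 * V)"
    unfolding pc using Vpos by (simp add: field_simps)
  then have "sqrt (1 - pearson_cor M X Y) = sqrt (2 * V - 2 * K) / sqrt (2 * V)"
    by (simp add: real_sqrt_divide)
  also have "sqrt (2 * V) = sqrt 2 * \<sigma>" by (simp add: \<sigma>_def real_sqrt_mult)
  also have "sqrt (2 * V - 2 * K) = sD" by (simp add: sD_def VD)
  finally have "sqrt (1 - pearson_cor M X Y) = sD / (sqrt 2 * \<sigma>)" .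
  then show ?thesis using A A2 by simp
qed


end
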